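(* Let $n\ge1$. For each $k\in\{0,1,\dots,n\}$ there is a unique polynomial $H_k$ of degree $k$ such that \[ \sum_{y=0}^n H_k(y)\binom{n}{y}x^y(1-x)^{n-y}=\tilde T_k(x)\quad\text{for all }x\in[0,1]. \] These polynomials are orthogonal with respect to $P_{Y_r}$: $\mathbb E[H_k(Y_r)H_m(Y_r)]=0$ for $0\le m<k\le n$. Moreover $\mathbb E[H_0(Y_r)^2]=1$ and, for $1\le k\le n$, \[ h_k:=\mathbb E[H_k(Y_r)^2]=\frac12\prod_{j=1}^k\frac{n+j}{n-j+1}. \]
   Context: $\tilde T_k(x)=\cos(k\arccos(2x-1))$, $x\in[0,1]$, is the shifted Chebyshev polynomial of the first kind of degree $k$. $Y_r$ is a random variable with the Beta-binomial pmf $P_{Y_r}(y)=\frac{\Gamma(y+1/2)\Gamma(n-y+1/2)}{\pi\,\Gamma(y+1)\Gamma(n-y+1)}$, $y=0,\dots,n$ (the output of the binomial channel $P_{Y|X}(y|x)=\binom{n}{y}x^y(1-x)^{n-y}$ when $X\sim\mathrm{Beta}(1/2,1/2)$). *)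

theory Defs
  imports "HOL-Analysis.Analysis" "HOL-Computational_Algebra.Polynomial"
begin

definition shifted_cheb :: "nat \<Rightarrow> real \<Rightarrow> real" where
  "shifted_cheb k x = cos (real k * arccos (2 * x - 1))"

text \<open>Beta-binomial pmf of Y_r (output of binomial channel with Beta(1/2,1/2) input).\<close>
definition PYr :: "nat \<Rightarrow> nat \<Rightarrow> real" where
  "PYr n y = Gamma (real y + 1/2) * Gamma (real n - real y + 1/2)
             / (pi * Gamma (real y + 1) * Gamma (real n - real y + 1))"

definition EYr :: "nat \<Rightarrow> (real \<Rightarrow> real) \<Rightarrow> real" where
  "EYr n f = (\<Sum>y=0..n. PYr n y * f (real y))"

definition binom_transform :: "nat \<Rightarrow> real poly \<Rightarrow> real \<Rightarrow> real" where
  "binom_transform n H x =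
     (\<Sum>y=0..n. poly H (real y) * real (n choose y) * x ^ y * (1 - x) ^ (n - y))"

end

theory Submission
  imports Defs
begin


fun Tp :: "nat \<Rightarrow> real poly" where
  "Tp 0 = 1"
| "Tp (Suc 0) = [:-1, 2:]"
| "Tp (Suc (Suc k)) = [:-2, 4:] * Tp (Suc k) - Tp k"

lemma Tp_cos: "poly (Tp k) ((1 + cos t) / 2) = cos (real k * t)"
proof (induction k rule: Tp.induct)
  case 1 then show ?case by simp
next
  case 2 then show ?case by (simp add: field_simps)
next
  case (3 k)
  have "cos (real (Suc (Suc k)) * t) = 2 * cos t * cos (real (Suc k) * t) - cos (real k * t)"
  proof -
    have a: "real (Suc (Suc k)) * t = real (Suc k) * t + t" by (simp add: algebra_simps)
    have b: "real k * t = real (Suc k) * t - t" by (simp add: algebra_simps)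
    show ?thesis unfolding a b cos_add cos_diff by (simp add: algebra_simps)
  qed
  then show ?case using 3 by (simp add: algebra_simps)
qed

lemma Tp_deg: "degree (Tp k) = k \<and> coeff (Tp k) k = (if k = 0 then 1 else 2 ^ (2*k-1))"
proof (induction k rule: Tp.induct)
  case 1 then show ?case by simp
next
  case 2 then show ?case by simp
next
  case (3 k)
  have d1: "degree ([:-2, 4:] * Tp (Suc k)) = Suc (Suc k)"
    using 3 by (subst degree_mult_eq) auto
  have c1: "coeff ([:-2, 4:] * Tp (Suc k)) (Suc (Suc k)) = 4 * 2 ^ (2 * Suc k - 1)"
    using 3 by (simp add: coeff_eq_0 coeff_mult_degree_sum[of "[:-2,4:]" "Tp (Suc k)", simplified])
  have "degree (Tp k) < Suc (Suc k)" using 3 by simp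
  then have d: "degree (Tp (Suc (Suc k))) = Suc (Suc k)"
    using d1 degree_add_eq_left[of "- Tp k" "[:-2, 4:] * Tp (Suc k)"] by simp
  have "coeff (Tp (Suc (Suc k))) (Suc (Suc k)) = 4 * 2 ^ (2 * Suc k - 1)"
    using c1 3 by (simp add: coeff_eq_0)
  also have "\<dots> = 2 ^ (2 * Suc (Suc k) - 1)" by (simp add: power_add[symmetric])
  finally show ?case using d by simp
qed

lemma shifted_cheb_Tp:
  assumes "x \<in> {0..1}"
  shows "shifted_cheb k x = poly (Tp k) x"
proof -
  define t where "t = arccos (2*x - 1)"
  have "cos t = 2*x - 1" unfolding t_def using assms by (intro cos_arccos) auto
  then have "x = (1 + cos t) / 2" by simp
  then have "poly (Tp k) x = cos (real k * t)" using Tp_cos by metis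
  then show ?thesis unfolding shifted_cheb_def t_def by simp
qed



definition Lp :: "real poly \<Rightarrow> real" where
  "Lp p = integral {0..pi} (\<lambda>t. poly p ((1 + cos t) / 2)) / pi"

lemma Lp_integrable: "(\<lambda>t. poly p ((1 + cos t) / 2)) integrable_on {0..pi}"
  by (intro integrable_continuous_interval continuous_intros) auto

lemma Lp_add: "Lp (p + q) = Lp p + Lp q"
  unfolding Lp_def poly_add integral_add[OF Lp_integrable Lp_integrable] by (simp add: add_divide_distrib)

lemma Lp_smult: "Lp (smult c p) = c * Lp p"
  unfolding Lp_def by simp

lemma Lp_diff: "Lp (p - q) = Lp p - Lp q"
  unfolding Lp_def poly_diff integral_diff[OF Lp_integrable Lp_integrable] by (simp add: diff_divide_distrib)

lemma Lp_sum: "Lp (\<Sum>i\<in>A. f i) = (\<Sum>i\<in>A. Lp (f i))"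
  by (induction A rule: infinite_finite_induct) (auto simp: Lp_add, auto simp: Lp_def)

lemma Lp_cong:
  assumes "\<And>x. x \<in> {0..1} \<Longrightarrow> poly p x = poly q x"
  shows "Lp p = Lp q"
proof -
  have "(1 + cos t) / 2 \<in> {0..(1::real)}" for t :: real
  proof -
    have "-1 \<le> cos t" "cos t \<le> 1" by auto
    then have "0 \<le> 1 + cos t" "1 + cos t \<le> 2" by linarith+
    then show ?thesis by simp
  qed
  then show ?thesis unfolding Lp_def using assms by simp
qed

lemma int_cos: "integral {0..pi} (\<lambda>t. cos (real m * t)) = (if m = 0 then pi else 0)"
proof (cases "m = 0")
  case True then show ?thesis by simp
next
  case False
  have "((\<lambda>t. cos (real m * t)) has_integral (sin (real m * pi) / real m - sin (real m * 0) / real m)) {0..pi}"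
  proof (rule fundamental_theorem_of_calculus)
    fix x assume "x \<in> {0..pi}"
    show "((\<lambda>t. sin (real m * t) / real m) has_vector_derivative cos (real m * x)) (at x within {0..pi})"
      unfolding has_real_derivative_iff_has_vector_derivative[symmetric]
      using False by (auto intro!: derivative_eq_intros)
  qed simp
  then show ?thesis using False by (simp add: integral_unique sin_npi_int)
qed

lemma Lp_Tp_Tp: "Lp (Tp i * Tp k) = (if i = k then (if k = 0 then 1 else 1/2) else 0)"
proof -
  define d where "d = (if k \<le> i then i - k else k - i)"
  have e: "poly (Tp i * Tp k) ((1 + cos t) / 2) = (cos (real d * t) + cos (real (i + k) * t)) / 2" for t
  proof -
    have "cos (real i * t - real k * t) = cos (real d * t)"
    proof (cases "k \<le> i")
      case True then show ?thesis by (simp add: d_def of_nat_diff left_diff_distrib)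
    next
      case False
      then have "real i * t - real k * t = - (real d * t)" by (simp add: d_def of_nat_diff algebra_simps)
      then show ?thesis by simp
    qed
    then show ?thesis by (simp add: Tp_cos cos_times_cos algebra_simps)
  qed
  have "Lp (Tp i * Tp k) = (integral {0..pi} (\<lambda>t. cos (real d * t)) + integral {0..pi} (\<lambda>t. cos (real (i + k) * t))) / 2 / pi"
    unfolding Lp_def e
    by (simp add: integral_add integrable_continuous_interval continuous_intros)
  then show ?thesis unfolding int_cos d_def by auto
qed



lemma degree_lt_if_coeff0:
  fixes r :: "real poly"
  assumes "degree r \<le> e" "coeff r e = 0" "r \<noteq> 0"
  shows "degree r < e"
proof -
  have "coeff r (degree r) \<noteq> 0" using assms(3) by simp
  then have "degree r \<noteq> e" using assms(2) by auto
  then show ?thesis using assms(1) by simp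
qed

lemma span_zero:
  fixes \<Phi> :: "real poly \<Rightarrow> real" and Bs :: "nat \<Rightarrow> real poly"
  assumes add: "\<And>p q. \<Phi> (p + q) = \<Phi> p + \<Phi> q" and sm: "\<And>c p. \<Phi> (smult c p) = c * \<Phi> p"
    and deg: "\<And>j. degree (Bs j) = j" and lc: "\<And>j. coeff (Bs j) j \<noteq> 0"
    and z: "\<And>j. j < d \<Longrightarrow> \<Phi> (Bs j) = 0"
  shows "degree p < d \<or> p = 0 \<Longrightarrow> \<Phi> p = 0"
proof (induction "degree p" arbitrary: p rule: less_induct)
  case less
  have \<Phi>0: "\<Phi> 0 = 0" using sm[of 0 0] by simp
  show ?case
  proof (cases "p = 0")
    case True then show ?thesis using \<Phi>0 by simp
  next
    case False
    with less.prems have dl: "degree p < d" by auto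
    define e where "e = degree p"
    define c where "c = coeff p e / coeff (Bs e) e"
    define r where "r = p - smult c (Bs e)"
    have pr: "p = r + smult c (Bs e)" unfolding r_def by simp
    have "\<Phi> (Bs e) = 0" using z dl e_def by simp
    then have "\<Phi> p = \<Phi> r" using pr add[of r "smult c (Bs e)"] sm[of c "Bs e"] by simp
    moreover have "\<Phi> r = 0"
    proof (cases "r = 0")
      case True then show ?thesis using \<Phi>0 by simp
    next
      case False
      have "degree r \<le> e" unfolding r_def e_def using deg
        by (intro degree_diff_le) (auto simp: e_def)
      moreover have "coeff r e = 0" unfolding r_def c_def using lc by simp
      ultimately have "degree r < e" using False degree_lt_if_coeff0 by blast
      then show ?thesis using less.hyps[of r] e_def dl by auto
    qed
    ultimately show ?thesis by simp
  qed
qed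

lemma Lp_orth_Tp:
  assumes "degree q < k \<or> q = 0"
  shows "Lp (q * Tp k) = 0"
proof -
  show ?thesis
  proof (rule span_zero[of "\<lambda>q. Lp (q * Tp k)" Tp k q])
    show "\<And>p q. Lp ((p + q) * Tp k) = Lp (p * Tp k) + Lp (q * Tp k)"
      by (simp add: distrib_right Lp_add)
    show "\<And>c p. Lp (smult c p * Tp k) = c * Lp (p * Tp k)"
      by (simp add: Lp_smult)
    show "\<And>j. degree (Tp j) = j" using Tp_deg by blast
    show "\<And>j. coeff (Tp j) j \<noteq> 0" using Tp_deg by simp
    show "\<And>j. j < k \<Longrightarrow> Lp (Tp j * Tp k) = 0" by (simp add: Lp_Tp_Tp)
    show "degree q < k \<or> q = 0" by fact
  qed
qed

lemma X_pow: "degree ([:0,1:]^k :: real poly) = k" "coeff ([:0,1:]^k :: real poly) k = 1"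
  by (simp_all add: degree_power_eq coeff_linear_power)

lemma Lp_Xk_Tp:
  assumes "k \<ge> 1"
  shows "Lp ([:0,1:]^k * Tp k) = 1 / 4^k"
proof -
  define lc where "lc = (2::real) ^ (2*k-1)"
  have lck: "coeff (Tp k) k = lc" using Tp_deg[of k] assms by (simp add: lc_def)
  define r where "r = [:0,1:]^k - smult (1/lc) (Tp k)"
  have "r = 0 \<or> degree r < k"
  proof (cases "r = 0")
    case False
    have "degree r \<le> k" unfolding r_def using Tp_deg[of k] X_pow
      by (intro degree_diff_le) auto
    moreover have "coeff r k = 0" unfolding r_def using X_pow lck by (simp add: lc_def)
    ultimately show ?thesis using False degree_lt_if_coeff0 by blast
  qed simp
  then have r0: "Lp (r * Tp k) = 0" using Lp_orth_Tp by blast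
  have "[:0,1:]^k * Tp k = r * Tp k + smult (1/lc) (Tp k * Tp k)" unfolding r_def
    by (simp add: left_diff_distrib)
  then have "Lp ([:0,1:]^k * Tp k) = (1/lc) * (1/2)"
    using r0 assms by (simp add: Lp_add Lp_smult Lp_Tp_Tp)
  also have "\<dots> = 1 / 4^k"
  proof -
    have e: "2*k-1+1 = 2*k" using assms by simp
    have "(2::real) ^ (2*k-1) * 2 = 2 ^ (2*k-1+1)" by (simp add: power_add)
    also have "\<dots> = 4^k" unfolding e power_mult by simp
    finally have "(2::real) ^ (2*k-1) * 2 = 4^k" .
    then show ?thesis by (simp add: lc_def field_simps)
  qed
  finally show ?thesis .
qed



lemma poly_Xab: "poly ([:0,1:]^a * [:1,-1:]^b) (x::real) = x^a * (1 - x)^b"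
proof -
  have e: "poly [:1,-1:] x = 1 - x" by simp
  show ?thesis unfolding poly_mult poly_power e by simp
qed

lemma omx: "1 - (1 + cos t) / 2 = (1 - cos t) / (2::real)"
  by (simp add: field_simps)

definition M :: "nat \<Rightarrow> nat \<Rightarrow> real" where
  "M a b = Lp ([:0,1:]^a * [:1,-1:]^b)"

lemma powm1: "real a * (y::real)^(a-1) * y = real a * y^a"
  by (cases a) auto

lemma pearson_deriv:
  fixes t :: real
  defines "u \<equiv> (1 + cos t) / 2" and "v \<equiv> (1 - cos t) / 2"
  shows "((\<lambda>t. sin t * ((1 + cos t)/2)^a * ((1 - cos t)/2)^b) has_real_derivative
          ((2*real b+1) * u^(a+1) * v^b - (2*real a+1) * u^a * v^(b+1))) (at t)"
proof -
  have D: "((\<lambda>t. sin t * ((1 + cos t)/2)^a * ((1 - cos t)/2)^b) has_real_derivative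
      (cos t * u^a * v^b + sin t * (real a * u^(a-1) * (- sin t / 2)) * v^b
        + sin t * u^a * (real b * v^(b-1) * (sin t / 2)))) (at t)"
    unfolding u_def v_def by (auto intro!: derivative_eq_intros simp: algebra_simps)
  have h: "sin t * sin t = 1 - cos t * cos t" using sin_squared_eq[of t] by (simp add: power2_eq_square)
  have s2: "sin t * sin t = 4 * u * v" unfolding h u_def v_def by (simp add: field_simps)
  have c: "cos t = u - v" unfolding u_def v_def by (simp add: field_simps)
  have t1: "sin t * (real a * u^(a-1) * (- sin t / 2)) * v^b = - 2 * (real a * u^(a-1) * u) * v * v^b"
  proof -
    have "sin t * (real a * u^(a-1) * (- sin t / 2)) * v^b = - (real a * u ^ (a - 1) * v ^ b / 2) * (sin t * sin t)"
      by (simp add: algebra_simps)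
    also have "\<dots> = - 2 * (real a * u^(a-1) * u) * v * v^b" unfolding s2 by (simp add: algebra_simps)
    finally show ?thesis .
  qed
  have t2: "sin t * u^a * (real b * v^(b-1) * (sin t / 2)) = 2 * u * u^a * (real b * v^(b-1) * v)"
  proof -
    have "sin t * u^a * (real b * v^(b-1) * (sin t / 2)) = (u ^ a * real b * v ^ (b - 1) / 2) * (sin t * sin t)"
      by (simp add: algebra_simps)
    also have "\<dots> = 2 * u * u^a * (real b * v^(b-1) * v)" unfolding s2 by (simp add: algebra_simps)
    finally show ?thesis .
  qed
  have "cos t * u^a * v^b + sin t * (real a * u^(a-1) * (- sin t / 2)) * v^b
        + sin t * u^a * (real b * v^(b-1) * (sin t / 2))
      = (u - v) * u^a * v^b - 2 * (real a * u^(a-1) * u) * v * v^b + 2 * u * u^a * (real b * v^(b-1) * v)"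
    unfolding t1 t2 c by simp
  also have "\<dots> = (2*real b+1) * u^(a+1) * v^b - (2*real a+1) * u^a * v^(b+1)"
    unfolding powm1 by (simp add: algebra_simps)
  finally show ?thesis using D by simp
qed

lemma pearson: "(2*real b+1) * M (a+1) b = (2*real a+1) * M a (b+1)"
proof -
  define E where "E t = (2*real b+1) * ((1 + cos t) / 2)^(a+1) * ((1 - cos t) / 2)^b
       - (2*real a+1) * ((1 + cos t) / 2)^a * ((1 - cos t) / 2)^(b+1)" for t
  have "(E has_integral ((\<lambda>t. sin t * ((1 + cos t)/2)^a * ((1 - cos t)/2)^b) pi
      - (\<lambda>t. sin t * ((1 + cos t)/2)^a * ((1 - cos t)/2)^b) 0)) {0..pi}"
  proof (rule fundamental_theorem_of_calculus)
    fix x assume "x \<in> {0..pi}"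
    show "((\<lambda>t. sin t * ((1 + cos t)/2)^a * ((1 - cos t)/2)^b) has_vector_derivative E x) (at x within {0..pi})"
      unfolding has_real_derivative_iff_has_vector_derivative[symmetric] E_def
      by (rule has_field_derivative_at_within[OF pearson_deriv])
  qed simp
  then have I: "integral {0..pi} E = 0" by (simp add: integral_unique)
  define P where "P = smult (2*real b+1) ([:0,1:]^(a+1) * [:1,-1:]^b)
      - smult (2*real a+1) ([:0,1:]^a * [:1,-1:]^(b+1))"
  have "\<And>t. poly P ((1 + cos t) / 2) = E t"
    unfolding P_def E_def poly_diff poly_smult poly_Xab omx by simp
  then have "Lp P = 0" unfolding Lp_def using I by simp
  then show ?thesis unfolding P_def M_def Lp_diff Lp_smult by simp
qed

lemma M_split: "M a b = M (a+1) b + M a (b+1)"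
proof -
  have "[:0,1:]^a * [:1,-1:]^b = ([:0,1:]^(a+1) * [:1,-1:]^b + [:0,1:]^a * [:1,-1:]^(b+1) :: real poly)"
  proof -
    have "[:0,1:]^(a+1) * [:1,-1:]^b + [:0,1:]^a * [:1,-1:]^(b+1)
       = ([:0,1:]^a * [:1,-1:]^b) * ([:0,1:] + [:1,-1:] :: real poly)"
      by (simp add: algebra_simps)
    also have "([:0,1:] + [:1,-1:] :: real poly) = 1" by (simp add: one_pCons)
    finally show ?thesis by simp
  qed
  from arg_cong[OF this, of Lp] show ?thesis unfolding M_def Lp_add .
qed

lemma M00: "M 0 0 = 1"
  unfolding M_def Lp_def by simp

lemma M_Suc_a: "M (a+1) b = (2*real a+1) / (2*real a + 2*real b + 2) * M a b"
proof -
  have "(2*real a+1) * M a b = (2*real a+1) * M (a+1) b + (2*real b+1) * M (a+1) b"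
    using M_split[of a b] pearson[of b a] by (simp add: algebra_simps)
  then have "(2*real a+1) * M a b = (2*real a + 2*real b + 2) * M (a+1) b"
    by (simp add: algebra_simps)
  then show ?thesis by (simp add: field_simps)
qed

lemma M_Suc_b: "M a (b+1) = (2*real b+1) / (2*real a + 2*real b + 2) * M a b"
proof -
  have "(2*real b+1) * M a b = (2*real a+1) * M a (b+1) + (2*real b+1) * M a (b+1)"
    using M_split[of a b] pearson[of b a] by (simp add: algebra_simps)
  then have "(2*real b+1) * M a b = (2*real a + 2*real b + 2) * M a (b+1)"
    by (simp add: algebra_simps)
  then show ?thesis by (simp add: field_simps)
qed

definition Gm :: "nat \<Rightarrow> nat \<Rightarrow> real" where
  "Gm a b = Gamma (real a + 1/2) * Gamma (real b + 1/2) / (pi * Gamma (real a + real b + 1))"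

lemma Gamma_pos_plus1: "(x::real) > 0 \<Longrightarrow> Gamma (x + 1) = x * Gamma x"
  by (rule Gamma_plus1) (auto elim!: nonpos_Ints_cases)

lemma Gm_Suc_a: "Gm (a+1) b = (2*real a+1) / (2*real a + 2*real b + 2) * Gm a b"
proof -
  have g1: "Gamma (real (a+1) + 1/2) = (real a + 1/2) * Gamma (real a + 1/2)"
    using Gamma_pos_plus1[of "real a + 1/2"] by (simp add: algebra_simps)
  have g2: "Gamma (real (a+1) + real b + 1) = (real a + real b + 1) * Gamma (real a + real b + 1)"
    using Gamma_pos_plus1[of "real a + real b + 1"] by (simp add: algebra_simps)
  have "Gamma (real a + real b + 1) > 0" by simp
  then show ?thesis unfolding Gm_def g1 g2 by (simp add: field_simps)
qed

lemma Gm_Suc_b: "Gm a (b+1) = (2*real b+1) / (2*real a + 2*real b + 2) * Gm a b"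
proof -
  have g1: "Gamma (real (b+1) + 1/2) = (real b + 1/2) * Gamma (real b + 1/2)"
    using Gamma_pos_plus1[of "real b + 1/2"] by (simp add: algebra_simps)
  have g2: "Gamma (real a + real (b+1) + 1) = (real a + real b + 1) * Gamma (real a + real b + 1)"
    using Gamma_pos_plus1[of "real a + real b + 1"] by (simp add: algebra_simps)
  have "Gamma (real a + real b + 1) > 0" by simp
  then show ?thesis unfolding Gm_def g1 g2 by (simp add: field_simps)
qed

lemma Gm00: "Gm 0 0 = 1"
  unfolding Gm_def by (simp add: Gamma_one_half_real)

lemma M_Gm: "M a b = Gm a b"
proof (induction a arbitrary: b)
  case 0
  show ?case
  proof (induction b)
    case 0 then show ?case by (simp add: M00 Gm00)
  next
    case (Suc b) then show ?case using M_Suc_b[of 0 b] Gm_Suc_b[of 0 b] by simp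
  qed
next
  case (Suc a) then show ?case using M_Suc_a[of a b] Gm_Suc_a[of a b] by simp
qed



definition BP :: "nat \<Rightarrow> real poly \<Rightarrow> real poly" where
  "BP n H = (\<Sum>y=0..n. smult (poly H (real y) * real (n choose y)) ([:0,1:]^y * [:1,-1:]^(n-y)))"

lemma poly_BP: "poly (BP n H) x = binom_transform n H x"
  unfolding BP_def binom_transform_def poly_sum poly_smult poly_Xab
  by (simp add: algebra_simps)

definition G :: "nat \<Rightarrow> real poly" where
  "G j = pochhammer [:1/2, 1:] j"

lemma poly_G: "poly (G j) x = pochhammer (x + 1/2) j"
  unfolding G_def
  by (induction j) (simp_all add: pochhammer_Suc of_nat_poly algebra_simps)

lemma G_deg: "degree (G j) = j \<and> coeff (G j) j = 1"
proof (induction j)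
  case 0 then show ?case by (simp add: G_def)
next
  case (Suc j)
  have e: "G (Suc j) = G j * [:1/2 + real j, 1:]"
    unfolding G_def by (simp add: pochhammer_Suc of_nat_poly)
  have "G j \<noteq> 0" using Suc by auto
  then have d: "degree (G (Suc j)) = Suc j" unfolding e using Suc by (subst degree_mult_eq) auto
  have "coeff (G (Suc j)) (Suc j) = 1"
    using coeff_mult_degree_sum[of "G j" "[:1/2 + real j, 1:]"] Suc unfolding e by simp
  then show ?case using d by simp
qed

lemma Gamma_nat1: "Gamma (real m + 1) = fact m"
  using Gamma_fact[of m] by (simp add: add.commute)

lemma alg_aux:
  fixes An By Cny Gyj Gny Enj Gy p :: real
  assumes "An > 0" "By > 0" "Cny > 0" "Enj > 0" "Gy > 0" "p > 0"
  shows "An / (By * Cny) * (Gyj * Gny / (p * Enj)) * (Enj / An) = Gy * Gny / (p * By * Cny) * (Gyj / Gy)"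
  using assms by (simp add: field_simps)

lemma weight_identity:
  assumes "y \<le> n"
  shows "real (n choose y) * M (j+y) (n-y) * pochhammer (real n + 1) j
       = PYr n y * pochhammer (real y + 1/2) j"
proof -
  have nn: "real n + 1 \<notin> \<int>\<^sub>\<le>\<^sub>0" "real y + 1/2 \<notin> \<int>\<^sub>\<le>\<^sub>0"
    by (auto elim!: nonpos_Ints_cases)
  have p1: "pochhammer (real n + 1) j = Gamma (real n + 1 + real j) / Gamma (real n + 1)"
    using pochhammer_Gamma[OF nn(1)] .
  have p2: "pochhammer (real y + 1/2) j = Gamma (real y + 1/2 + real j) / Gamma (real y + 1/2)"
    using pochhammer_Gamma[OF nn(2)] .
  have ny: "real (n - y) = real n - real y" using assms by (simp add: of_nat_diff)
  have b: "real (n choose y) = fact n / (fact y * fact (n - y))"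
    using binomial_fact[OF assms] by simp
  have f1: "fact n = Gamma (real n + 1)" using Gamma_nat1 by simp
  have f2: "fact y = Gamma (real y + 1)" using Gamma_nat1 by simp
  have f3: "fact (n - y) = Gamma (real n - real y + 1)" using Gamma_nat1[of "n-y"] ny by simp
  have gm: "M (j+y) (n-y) = Gamma (real y + 1/2 + real j) * Gamma (real n - real y + 1/2)
       / (pi * Gamma (real n + 1 + real j))"
    unfolding M_Gm Gm_def ny by (simp add: algebra_simps)
  have pos: "Gamma (real n + 1) > 0" "Gamma (real y + 1) > 0" "Gamma (real n - real y + 1) > 0"
     "Gamma (real n + 1 + real j) > 0" "Gamma (real y + 1/2) > 0"
    using assms by auto
  show ?thesis unfolding p1 p2 b f1 f2 f3 gm PYr_def using pos pi_gt_zero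
    by (rule alg_aux)
qed

lemma ORTH:
  "(\<Sum>y=0..n. PYr n y * (poly H (real y) * poly (G j) (real y)))
     = pochhammer (real n + 1) j * Lp ([:0,1:]^j * BP n H)"
proof -
  have "[:0,1:]^j * BP n H = (\<Sum>y=0..n. smult (poly H (real y) * real (n choose y)) ([:0,1:]^(j+y) * [:1,-1:]^(n-y)))"
    unfolding BP_def sum_distrib_left by (simp add: power_add mult.assoc)
  then have "Lp ([:0,1:]^j * BP n H) = (\<Sum>y=0..n. poly H (real y) * real (n choose y) * M (j+y) (n-y))"
    by (simp add: Lp_sum Lp_smult M_def)
  then have "pochhammer (real n + 1) j * Lp ([:0,1:]^j * BP n H)
     = (\<Sum>y=0..n. poly H (real y) * (real (n choose y) * M (j+y) (n-y) * pochhammer (real n + 1) j))"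
    by (simp add: sum_distrib_left algebra_simps)
  also have "\<dots> = (\<Sum>y=0..n. poly H (real y) * (PYr n y * pochhammer (real y + 1/2) j))"
    by (intro sum.cong refl) (simp add: weight_identity)
  finally show ?thesis by (simp add: poly_G algebra_simps)
qed

lemma orth_zero:
  assumes "\<And>j. j < d \<Longrightarrow> Lp ([:0,1:]^j * BP n H) = 0"
    and "degree p < d \<or> p = 0"
  shows "EYr n (\<lambda>y. poly H y * poly p y) = 0"
proof (rule span_zero[of "\<lambda>p. EYr n (\<lambda>y. poly H y * poly p y)" G d p])
  show "\<And>p q. EYr n (\<lambda>y. poly H y * poly (p + q) y) = EYr n (\<lambda>y. poly H y * poly p y) + EYr n (\<lambda>y. poly H y * poly q y)"
    unfolding EYr_def by (simp add: algebra_simps sum.distrib)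
  show "\<And>c p. EYr n (\<lambda>y. poly H y * poly (smult c p) y) = c * EYr n (\<lambda>y. poly H y * poly p y)"
    unfolding EYr_def by (simp add: algebra_simps sum_distrib_left)
  show "\<And>j. degree (G j) = j" using G_deg by blast
  show "\<And>j. coeff (G j) j \<noteq> 0" using G_deg by simp
  show "\<And>j. j < d \<Longrightarrow> EYr n (\<lambda>y. poly H y * poly (G j) y) = 0"
    unfolding EYr_def ORTH using assms(1) by simp
  show "degree p < d \<or> p = 0" by fact
qed



definition bbp :: "nat \<Rightarrow> real poly" where
  "bbp j = smult (1 / fact j) (\<Prod>i<j. [:- real i, 1:])"

lemma poly_bbp: "poly (bbp j) (real y) = real (y choose j)"
proof -
  have "real (y choose j) = (real y gchoose j)" by (rule binomial_gbinomial)
  also have "\<dots> = (\<Prod>i=0..<j. real y - real i) / fact j" by (simp add: gbinomial_prod_rev)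
  finally show ?thesis unfolding bbp_def poly_smult poly_prod
    by (simp add: lessThan_atLeast0)
qed

lemma prod_lin_deg: "degree (\<Prod>i<j. [:- real i, 1:]) = j \<and> coeff (\<Prod>i<j. [:- real i, 1:]) j = 1"
proof (induction j)
  case 0 then show ?case by simp
next
  case (Suc j)
  have ne: "(\<Prod>i<j. [:- real i, 1:]) \<noteq> 0" using Suc by auto
  have d: "degree ((\<Prod>i<j. [:- real i, 1:]) * [:- real j, 1:]) = Suc j"
    using Suc ne by (subst degree_mult_eq) auto
  have "coeff ((\<Prod>i<j. [:- real i, 1:]) * [:- real j, 1:]) (Suc j) = 1"
    using coeff_mult_degree_sum[of "\<Prod>i<j. [:- real i, 1:]" "[:- real j, 1:]"] Suc by simp
  then show ?case using d by simp
qed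

lemma bbp_deg: "degree (bbp j) = j" "coeff (bbp j) j = 1 / fact j"
  using prod_lin_deg[of j] by (simp_all add: bbp_def)

lemma bt_bbp:
  assumes "j \<le> n"
  shows "binom_transform n (bbp j) x = real (n choose j) * x^j"
proof -
  have "binom_transform n (bbp j) x = (\<Sum>y=0..n. real (y choose j) * real (n choose y) * x ^ y * (1 - x) ^ (n - y))"
    unfolding binom_transform_def poly_bbp ..
  also have "\<dots> = (\<Sum>y=j..n. real (y choose j) * real (n choose y) * x ^ y * (1 - x) ^ (n - y))"
    by (rule sum.mono_neutral_right) (auto simp: binomial_eq_0)
  also have "\<dots> = (\<Sum>i=0..n-j. real ((i+j) choose j) * real (n choose (i+j)) * x ^ (i+j) * (1 - x) ^ (n - (i+j)))"
    using sum.shift_bounds_cl_nat_ivl[of "\<lambda>y. real (y choose j) * real (n choose y) * x ^ y * (1 - x) ^ (n - y)" 0 j "n-j"]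
      assms by simp
  also have "\<dots> = (\<Sum>i=0..n-j. real (n choose j) * x^j * (real ((n-j) choose i) * x ^ i * (1 - x) ^ ((n-j) - i)))"
  proof (intro sum.cong refl)
    fix i assume i: "i \<in> {0..n-j}"
    have "(n choose (i+j)) * ((i+j) choose j) = (n choose j) * ((n - j) choose (i + j - j))"
      using i assms by (intro choose_mult) auto
    then have c: "real (n choose (i+j)) * real ((i+j) choose j) = real (n choose j) * real ((n-j) choose i)"
      by (metis add_diff_cancel_right' of_nat_mult)
    have e: "n - (i+j) = (n-j) - i" by simp
    show "real ((i+j) choose j) * real (n choose (i+j)) * x ^ (i+j) * (1 - x) ^ (n - (i+j))
        = real (n choose j) * x^j * (real ((n-j) choose i) * x ^ i * (1 - x) ^ ((n-j) - i))"
      unfolding e power_add using c by (simp add: algebra_simps)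
  qed
  also have "\<dots> = real (n choose j) * x^j * (x + (1 - x))^(n-j)"
    unfolding binomial_ring sum_distrib_left by (simp add: atLeast0AtMost)
  finally show ?thesis by simp
qed

lemma bt_lin: "binom_transform n (\<Sum>j\<in>A. smult (c j) (P j)) x = (\<Sum>j\<in>A. c j * binom_transform n (P j) x)"
  unfolding binom_transform_def poly_sum poly_smult
  by (simp add: sum_distrib_left sum_distrib_right algebra_simps sum.swap[of _ A])

lemma bt_diff: "binom_transform n (p - q) x = binom_transform n p x - binom_transform n q x"
  unfolding binom_transform_def by (simp add: algebra_simps sum_subtractf)

definition Hc :: "nat \<Rightarrow> nat \<Rightarrow> real poly" where
  "Hc n k = (\<Sum>j\<le>k. smult (coeff (Tp k) j / real (n choose j)) (bbp j))"

lemma Hc_bt: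
  assumes "k \<le> n"
  shows "binom_transform n (Hc n k) x = poly (Tp k) x"
proof -
  have "binom_transform n (Hc n k) x = (\<Sum>j\<le>k. coeff (Tp k) j / real (n choose j) * (real (n choose j) * x^j))"
    unfolding Hc_def bt_lin using assms by (intro sum.cong refl) (simp add: bt_bbp)
  also have "\<dots> = (\<Sum>j\<le>k. coeff (Tp k) j * x^j)"
    using assms by (intro sum.cong refl) simp
  also have "\<dots> = poly (Tp k) x" using poly_altdef[of "Tp k" x] Tp_deg[of k] by simp
  finally show ?thesis .
qed

lemma Hc_deg:
  assumes "k \<le> n"
  shows "degree (Hc n k) = k" "coeff (Hc n k) k = coeff (Tp k) k / (real (n choose k) * fact k)"
proof -
  have c: "coeff (Hc n k) k = coeff (Tp k) k / (real (n choose k) * fact k)"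
  proof -
    have "coeff (Hc n k) k = (\<Sum>j\<le>k. coeff (Tp k) j / real (n choose j) * coeff (bbp j) k)"
      unfolding Hc_def coeff_sum by simp
    also have "\<dots> = coeff (Tp k) k / real (n choose k) * coeff (bbp k) k"
    proof -
      have s: "{..k} = insert k {..<k}" by auto
      have "(\<Sum>j<k. coeff (Tp k) j / real (n choose j) * coeff (bbp j) k) = 0"
        using bbp_deg(1) by (intro sum.neutral) (auto intro!: coeff_eq_0)
      then show ?thesis unfolding s by simp
    qed
    finally show ?thesis by (simp add: bbp_deg)
  qed
  have "degree (Hc n k) \<le> k" unfolding Hc_def
    by (intro degree_sum_le) (auto simp: bbp_deg)
  moreover have "coeff (Hc n k) k \<noteq> 0" unfolding c using Tp_deg[of k] assms by simp
  ultimately show "degree (Hc n k) = k" using le_degree[of "Hc n k" k] by linarith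
  show "coeff (Hc n k) k = coeff (Tp k) k / (real (n choose k) * fact k)" by (fact c)
qed



lemma PYr_pos: "y \<le> n \<Longrightarrow> PYr n y > 0"
proof -
  assume a: "y \<le> n"
  then have "real y \<le> real n" by simp
  then have "real n - real y + 1/2 > 0" "real n - real y + 1 > 0" by linarith+
  then show ?thesis unfolding PYr_def by (intro divide_pos_pos mult_pos_pos) auto
qed

lemma uniq:
  assumes "degree H1 \<le> n" "degree H2 \<le> n"
    and "\<And>x. x \<in> {0..1} \<Longrightarrow> binom_transform n H1 x = binom_transform n H2 x"
  shows "H1 = H2"
proof (rule ccontr)
  assume ne: "H1 \<noteq> H2"
  define D where "D = H1 - H2"
  have D0: "D \<noteq> 0" using ne by (simp add: D_def)
  have dD: "degree D \<le> n" unfolding D_def using assms(1,2) by (rule degree_diff_le)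
  have bt0: "poly (BP n D) x = 0" if "x \<in> {0..1}" for x
    unfolding poly_BP D_def bt_diff using assms(3)[OF that] by simp
  have "EYr n (\<lambda>y. poly D y * poly D y) = 0"
  proof (rule orth_zero[where d = "Suc n"])
    fix j
    have "Lp ([:0,1:]^j * BP n D) = Lp 0"
      by (rule Lp_cong) (simp add: bt0)
    then show "Lp ([:0,1:]^j * BP n D) = 0" by (simp add: Lp_def)
  next
    show "degree D < Suc n \<or> D = 0" using dD by simp
  qed
  then have "(\<Sum>y=0..n. PYr n y * (poly D (real y) * poly D (real y))) = 0"
    unfolding EYr_def .
  moreover have "\<forall>y\<in>{0..n}. 0 \<le> PYr n y * (poly D (real y) * poly D (real y))"
  proof
    fix y assume "y \<in> {0..n}"
    then have "PYr n y \<ge> 0" using PYr_pos[of y n] by simp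
    then show "0 \<le> PYr n y * (poly D (real y) * poly D (real y))"
      using mult_nonneg_nonneg zero_le_square by blast
  qed
  ultimately have "\<forall>y\<in>{0..n}. PYr n y * (poly D (real y) * poly D (real y)) = 0"
    using sum_nonneg_eq_0_iff[of "{0..n}" "\<lambda>y. PYr n y * (poly D (real y) * poly D (real y))"] by simp
  then have z: "\<forall>y\<in>{0..n}. poly D (real y) = 0"
  proof (intro ballI)
    fix y assume y: "y \<in> {0..n}"
    assume h: "\<forall>y\<in>{0..n}. PYr n y * (poly D (real y) * poly D (real y)) = 0"
    have p: "PYr n y > 0" using PYr_pos[of y n] y by simp
    from h y have "PYr n y * (poly D (real y) * poly D (real y)) = 0" by blast
    then have "poly D (real y) * poly D (real y) = 0" using p by simp
    then show "poly D (real y) = 0" by simp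
  qed
  have "real ` {0..n} \<subseteq> {x. poly D x = 0}" using z by auto
  then have "card (real ` {0..n}) \<le> card {x. poly D x = 0}"
    by (intro card_mono poly_roots_finite D0)
  also have "\<dots> \<le> degree D" by (rule card_poly_roots_bound[OF D0])
  finally have c: "card (real ` {0..n}) \<le> degree D" .
  have "card (real ` {0..n}) = Suc n" by (subst card_image) (auto simp: inj_on_def)
  then have "Suc n \<le> degree D" using c by simp
  then show False using dD by simp
qed

lemma cheb_Lp:
  assumes "k \<le> n" "\<And>x. x \<in> {0..1} \<Longrightarrow> binom_transform n H x = shifted_cheb k x"
  shows "Lp ([:0,1:]^j * BP n H) = Lp ([:0,1:]^j * Tp k)"
  by (rule Lp_cong) (simp add: poly_BP assms(2) shifted_cheb_Tp)

lemma norm_formula: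
  assumes "k \<le> n" "degree H = k" "\<And>x. x \<in> {0..1} \<Longrightarrow> binom_transform n H x = shifted_cheb k x"
  shows "EYr n (\<lambda>y. (poly H y)\<^sup>2) = coeff (Tp k) k / (real (n choose k) * fact k) * pochhammer (real n + 1) k * Lp ([:0,1:]^k * Tp k)"
proof -
  have HH: "H = Hc n k"
  proof (rule uniq[of H n "Hc n k"])
    show "degree H \<le> n" using assms by simp
    show "degree (Hc n k) \<le> n" using Hc_deg assms by simp
    fix x :: real assume "x \<in> {0..1}"
    then show "binom_transform n H x = binom_transform n (Hc n k) x"
      using assms(3) Hc_bt[OF assms(1)] shifted_cheb_Tp by simp
  qed
  define c where "c = coeff H k"
  define R where "R = H - smult c (G k)"
  have R: "degree R < k \<or> R = 0"
  proof (cases "R = 0")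
    case False
    have "degree R \<le> k" unfolding R_def using assms(2) G_deg[of k]
      by (intro degree_diff_le) auto
    moreover have "coeff R k = 0" unfolding R_def c_def using G_deg[of k] by simp
    ultimately show ?thesis using False degree_lt_if_coeff0 by blast
  qed simp
  have orthk: "Lp ([:0,1:]^j * BP n H) = 0" if "j < k" for j
  proof -
    have "Lp ([:0,1:]^j * BP n H) = Lp ([:0,1:]^j * Tp k)" by (rule cheb_Lp[OF assms(1,3)])
    also have "\<dots> = 0" by (rule Lp_orth_Tp) (simp add: X_pow that)
    finally show ?thesis .
  qed
  have e1: "EYr n (\<lambda>y. poly H y * poly R y) = 0" by (rule orth_zero[OF orthk R])
  have e2: "EYr n (\<lambda>y. poly H y * poly (G k) y) = pochhammer (real n + 1) k * Lp ([:0,1:]^k * Tp k)"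
    unfolding EYr_def ORTH using cheb_Lp[OF assms(1,3), of k] by simp
  have "EYr n (\<lambda>y. (poly H y)\<^sup>2) = EYr n (\<lambda>y. poly H y * poly R y) + c * EYr n (\<lambda>y. poly H y * poly (G k) y)"
  proof -
    have "\<And>y. (poly H y)\<^sup>2 = poly H y * poly R y + c * (poly H y * poly (G k) y)"
      unfolding R_def by (simp add: power2_eq_square algebra_simps)
    then show ?thesis unfolding EYr_def by (simp add: sum.distrib sum_distrib_left algebra_simps)
  qed
  also have "\<dots> = c * (pochhammer (real n + 1) k * Lp ([:0,1:]^k * Tp k))" using e1 e2 by simp
  finally show ?thesis unfolding c_def HH Hc_deg(2)[OF assms(1)] by simp
qed

lemma ratio_aux:
  fixes P A B d e :: real
  assumes "A > 0" "d > 0" "B > 0"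
  shows "P * e / (A / B) = P / (A / (d * B)) * (e / d)"
  using assms by (simp add: field_simps)

lemma ratio_prod:
  assumes "k \<le> n"
  shows "pochhammer (real n + 1) k / (real (n choose k) * fact k)
       = (\<Prod>j=1..k. (real n + real j) / (real n - real j + 1))"
  using assms
proof (induction k)
  case 0 then show ?case by simp
next
  case (Suc k)
  have kn: "k < n" using Suc by simp
  have b: "real (n choose k) * fact k = fact n / fact (n - k)"
    using binomial_fact[of k n] kn by (simp add: field_simps)
  have b': "real (n choose Suc k) * fact (Suc k) = fact n / fact (n - Suc k)"
    using binomial_fact[of "Suc k" n] Suc by (simp add: field_simps del: fact_Suc)
  have f: "fact (n - k) = (real n - real k) * fact (n - Suc k)"
  proof -
    have "n - k = Suc (n - Suc k)" using kn by simp
    then have "fact (n - k) = real (Suc (n - Suc k)) * fact (n - Suc k)" by (simp only: fact_Suc)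
    then show ?thesis using kn by (simp add: of_nat_diff)
  qed
  have nk: "real n - real k > 0" using kn by simp
  have "pochhammer (real n + 1) (Suc k) / (real (n choose Suc k) * fact (Suc k))
      = pochhammer (real n + 1) k / (real (n choose k) * fact k) * ((real n + real (Suc k)) / (real n - real (Suc k) + 1))"
  proof -
    have e1: "real n + real (Suc k) = real n + 1 + real k" "real n - real (Suc k) + 1 = real n - real k" by simp_all
    show ?thesis unfolding b b' pochhammer_Suc f e1
      by (rule ratio_aux) (use nk in auto)
  qed
  also have "\<dots> = (\<Prod>j=1..Suc k. (real n + real j) / (real n - real j + 1))"
    using Suc kn by simp
  finally show ?case .
qed


lemma two_pow_aux: "k \<ge> 1 \<Longrightarrow> (2::real) ^ (2*k-1) * (1 / 4^k) = 1/2"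
proof -
  assume k: "k \<ge> 1"
  have e: "2*k-1+1 = 2*k" using k by simp
  have "(2::real) ^ (2*k-1) * 2 = 2 ^ (2*k-1+1)" by (simp add: power_add)
  also have "\<dots> = 4^k" unfolding e power_mult by simp
  finally have "(2::real) ^ (2*k-1) * 2 = 4^k" .
  then show ?thesis by (simp add: field_simps)
qed

theorem mainTheorem10:
  fixes n :: nat
  assumes "n \<ge> 1"
  shows "(\<forall>k\<le>n. \<exists>!H :: real poly. degree H = k \<and>
            (\<forall>x\<in>{0..1}. binom_transform n H x = shifted_cheb k x))
       \<and> (\<forall>H :: nat \<Rightarrow> real poly.
            (\<forall>k\<le>n. degree (H k) = k \<and>
               (\<forall>x\<in>{0..1}. binom_transform n (H k) x = shifted_cheb k x)) \<longrightarrow>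
            (\<forall>k m. m < k \<and> k \<le> n \<longrightarrow>
                EYr n (\<lambda>y. poly (H k) y * poly (H m) y) = 0)
            \<and> EYr n (\<lambda>y. (poly (H 0) y)\<^sup>2) = 1
            \<and> (\<forall>k. 1 \<le> k \<and> k \<le> n \<longrightarrow>
                EYr n (\<lambda>y. (poly (H k) y)\<^sup>2) =
                  1/2 * (\<Prod>j=1..k. (real n + real j) / (real n - real j + 1))))"
proof (intro conjI allI impI)
  fix k assume kn: "k \<le> n"
  show "\<exists>!H :: real poly. degree H = k \<and> (\<forall>x\<in>{0..1}. binom_transform n H x = shifted_cheb k x)"
  proof (rule ex1I[of _ "Hc n k"])
    show "degree (Hc n k) = k \<and> (\<forall>x\<in>{0..1}. binom_transform n (Hc n k) x = shifted_cheb k x)"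
      using Hc_deg(1)[OF kn] Hc_bt[OF kn] shifted_cheb_Tp by simp
  next
    fix H assume H: "degree H = k \<and> (\<forall>x\<in>{0..1}. binom_transform n H x = shifted_cheb k x)"
    show "H = Hc n k"
    proof (rule uniq[of H n "Hc n k"])
      show "degree H \<le> n" using H kn by simp
      show "degree (Hc n k) \<le> n" using Hc_deg(1)[OF kn] kn by simp
      fix x :: real assume "x \<in> {0..1}"
      then show "binom_transform n H x = binom_transform n (Hc n k) x"
        using H Hc_bt[OF kn] shifted_cheb_Tp by simp
    qed
  qed
next
  fix H :: "nat \<Rightarrow> real poly"
  assume HH: "\<forall>k\<le>n. degree (H k) = k \<and> (\<forall>x\<in>{0..1}. binom_transform n (H k) x = shifted_cheb k x)"
  {
    fix k m assume km: "m < k \<and> k \<le> n"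
    have kn: "k \<le> n" using km by simp
    have bt: "\<And>x. x \<in> {0..1} \<Longrightarrow> binom_transform n (H k) x = shifted_cheb k x" using HH kn by simp
    have orthk: "Lp ([:0,1:]^j * BP n (H k)) = 0" if "j < k" for j
    proof -
      have "Lp ([:0,1:]^j * BP n (H k)) = Lp ([:0,1:]^j * Tp k)" by (rule cheb_Lp[OF kn bt])
      also have "\<dots> = 0" by (rule Lp_orth_Tp) (simp add: X_pow that)
      finally show ?thesis .
    qed
    have "degree (H m) < k" using HH km by simp
    then show "EYr n (\<lambda>y. poly (H k) y * poly (H m) y) = 0"
      using orth_zero[OF orthk] by blast
  }
  {
    have bt: "\<And>x. x \<in> {0..1} \<Longrightarrow> binom_transform n (H 0) x = shifted_cheb 0 x" using HH by simp
    have "EYr n (\<lambda>y. (poly (H 0) y)\<^sup>2) = coeff (Tp 0) 0 / (real (n choose 0) * fact 0) * pochhammer (real n + 1) 0 * Lp ([:0,1:]^0 * Tp 0)"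
      by (rule norm_formula) (use HH bt in auto)
    also have "\<dots> = 1" using Lp_Tp_Tp[of 0 0] by simp
    finally show "EYr n (\<lambda>y. (poly (H 0) y)\<^sup>2) = 1" .
  }
  {
    fix k assume k: "1 \<le> k \<and> k \<le> n"
    have kn: "k \<le> n" using k by simp
    have bt: "\<And>x. x \<in> {0..1} \<Longrightarrow> binom_transform n (H k) x = shifted_cheb k x" using HH kn by simp
    have "EYr n (\<lambda>y. (poly (H k) y)\<^sup>2) = coeff (Tp k) k / (real (n choose k) * fact k) * pochhammer (real n + 1) k * Lp ([:0,1:]^k * Tp k)"
      by (rule norm_formula) (use HH bt kn in auto)
    also have "\<dots> = (2 ^ (2*k-1) * (1 / 4^k)) * (pochhammer (real n + 1) k / (real (n choose k) * fact k))"
      using Tp_deg[of k] Lp_Xk_Tp[of k] k by simp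
    also have "\<dots> = 1/2 * (\<Prod>j=1..k. (real n + real j) / (real n - real j + 1))"
    proof -
      have t: "(2::real)^(2*k-1) * (1/4^k) = 1/2" using two_pow_aux k by simp
      show ?thesis by (simp only: t ratio_prod[OF kn])
    qed
    finally show "EYr n (\<lambda>y. (poly (H k) y)\<^sup>2) = 1/2 * (\<Prod>j=1..k. (real n + real j) / (real n - real j + 1))" .
  }
qed

end
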